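(* Let $G$ be a vertex-weighted multigraph and let $H$ be a spanning submultigraph of $G$. If $H$ is admissibly contractible, then so is $G$.
   Context: A vertex-weighted multigraph is a quadruple $G=(V,E,r,\mathrm{wt})$ with $V$ a finite set of vertices, $E$ a finite set of edges, $r$ assigning to each edge an unordered pair $\{v,w\}$ of distinct vertices (its endpoints), and $\mathrm{wt}:V\to\mathbb{Z}$. Two vertices are adjacent if some edge has them as endpoints. $\deg(v)=\#\{e\in E: v\in r(e)\}$ and $\mathrm{rdeg}(v)$ is the number of vertices adjacent to $v$. $G_1$ is a submultigraph of $G_2$ if there are injective maps $\phi:V_1\to V_2$, $\psi:E_1\to E_2$ with $r_2\circ\psi=\phi\circ r_1$ and $\mathrm{wt}_1\leq\mathrm{wt}_2\circ\phi$; it is spanning if moreover $\phi$ is bijective. For adjacent vertices $v,w$ of $G$, the contraction $G'$ of $G$ with respect to $\{v,w\}$ is obtained by identifying $v$ and $w$ to one vertex of weight $\mathrm{wt}(v)+\mathrm{wt}(w)$, deleting all edges between $v$ and $w$, keeping all other edges (with endpoints replaced via the identification) and all other weights. Let $m=\#\{e: r(e)=\{v,w\}\}$. The contraction is admissible if, for some labeling of the pair as $v,w$, there is an integer $0\leq l<m$ such that: every vertex $x\notin\{v,w\}$ has $\deg(x)\geq 3$; $\mathrm{wt}(v)\geq l+1$ and $\mathrm{wt}(w)\geq l+2$; $\deg(v)-m+l\geq 3$ and $\deg(w)-m+l\geq 3$. $G$ is admissibly contractible if there is a sequence $G=G_0,G_1,\dots,G_k$ with $G_k$ a single vertex and each $G_i$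 an admissible contraction of $G_{i-1}$. *)

theory Defs
  imports Main
begin

record ('v, 'e) mgraph =
  verts :: "'v set"
  edges :: "'e set"
  ends  :: "'e \<Rightarrow> 'v set"
  wt    :: "'v \<Rightarrow> int"

definition wf_mgraph :: "('v, 'e) mgraph \<Rightarrow> bool" where
  "wf_mgraph G \<longleftrightarrow> finite (verts G) \<and> finite (edges G) \<and>
     (\<forall>e\<in>edges G. \<exists>v w. v \<in> verts G \<and> w \<in> verts G \<and> v \<noteq> w \<and> ends G e = {v, w})"

definition adjacent :: "('v, 'e) mgraph \<Rightarrow> 'v \<Rightarrow> 'v \<Rightarrow> bool" where
  "adjacent G v w \<longleftrightarrow> (\<exists>e\<in>edges G. ends G e = {v, w}) \<and> v \<noteq> w"

definition deg :: "('v, 'e) mgraph \<Rightarrow> 'v \<Rightarrow> nat" where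
  "deg G v = card {e \<in> edges G. v \<in> ends G e}"

definition mult :: "('v, 'e) mgraph \<Rightarrow> 'v \<Rightarrow> 'v \<Rightarrow> nat" where
  "mult G v w = card {e \<in> edges G. ends G e = {v, w}}"

definition submgraph :: "('v1, 'e1) mgraph \<Rightarrow> ('v2, 'e2) mgraph \<Rightarrow> bool" where
  "submgraph G1 G2 \<longleftrightarrow> (\<exists>\<phi> \<psi>.
     inj_on \<phi> (verts G1) \<and> \<phi> ` verts G1 \<subseteq> verts G2 \<and>
     inj_on \<psi> (edges G1) \<and> \<psi> ` edges G1 \<subseteq> edges G2 \<and>
     (\<forall>e\<in>edges G1. ends G2 (\<psi> e) = \<phi> ` ends G1 e) \<and>
     (\<forall>x\<in>verts G1. wt G1 x \<le> wt G2 (\<phi> x)))"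

definition spanning_submgraph :: "('v1, 'e1) mgraph \<Rightarrow> ('v2, 'e2) mgraph \<Rightarrow> bool" where
  "spanning_submgraph G1 G2 \<longleftrightarrow> (\<exists>\<phi> \<psi>.
     bij_betw \<phi> (verts G1) (verts G2) \<and>
     inj_on \<psi> (edges G1) \<and> \<psi> ` edges G1 \<subseteq> edges G2 \<and>
     (\<forall>e\<in>edges G1. ends G2 (\<psi> e) = \<phi> ` ends G1 e) \<and>
     (\<forall>x\<in>verts G1. wt G1 x \<le> wt G2 (\<phi> x)))"

text \<open>Contraction w.r.t. {v,w}: w is identified with v (the merged vertex keeps the name v).
  This realises the contraction up to isomorphism.\<close>
definition contract :: "('v, 'e) mgraph \<Rightarrow> 'v \<Rightarrow> 'v \<Rightarrow> ('v, 'e) mgraph" where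
  "contract G v w =
     \<lparr> verts = verts G - {w},
       edges = {e \<in> edges G. ends G e \<noteq> {v, w}},
       ends = (\<lambda>e. (\<lambda>x. if x = w then v else x) ` ends G e),
       wt = (wt G)(v := wt G v + wt G w) \<rparr>"

definition adm_cond :: "('v, 'e) mgraph \<Rightarrow> 'v \<Rightarrow> 'v \<Rightarrow> int \<Rightarrow> bool" where
  "adm_cond G v w l \<longleftrightarrow>
     0 \<le> l \<and> l < int (mult G v w) \<and>
     (\<forall>x\<in>verts G - {v, w}. deg G x \<ge> 3) \<and>
     wt G v \<ge> l + 1 \<and> wt G w \<ge> l + 2 \<and>
     int (deg G v) - int (mult G v w) + l \<ge> 3 \<and>
     int (deg G w) - int (mult G v w) + l \<ge> 3"

definition adm_step :: "('v, 'e) mgraph \<Rightarrow> ('v, 'e) mgraph \<Rightarrow> bool" where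
  "adm_step G G' \<longleftrightarrow> (\<exists>v w. v \<in> verts G \<and> w \<in> verts G \<and> adjacent G v w \<and>
      (\<exists>l. adm_cond G v w l \<or> adm_cond G w v l) \<and> G' = contract G v w)"

definition adm_contractible :: "('v, 'e) mgraph \<Rightarrow> bool" where
  "adm_contractible G \<longleftrightarrow> (\<exists>G'. adm_step\<^sup>*\<^sup>* G G' \<and> card (verts G') = 1)"

end

theory Submission
  imports Defs
begin

lemma deg_split:
  assumes "finite (edges K)"
  shows "deg K x = mult K x y + card {e \<in> edges K. x \<in> ends K e \<and> ends K e \<noteq> {x, y}}"
proof -
  have "{e \<in> edges K. x \<in> ends K e} = {e \<in> edges K. ends K e = {x, y}} \<union> {e \<in> edges K. x \<in> ends K e \<and> ends K e \<noteq> {x, y}}"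
    by auto
  moreover have "card ({e \<in> edges K. ends K e = {x, y}} \<union> {e \<in> edges K. x \<in> ends K e \<and> ends K e \<noteq> {x, y}})
     = card {e \<in> edges K. ends K e = {x, y}} + card {e \<in> edges K. x \<in> ends K e \<and> ends K e \<noteq> {x, y}}"
    by (rule card_Un_disjoint) (use assms in auto)
  ultimately show ?thesis unfolding deg_def mult_def by simp
qed

locale sp =
  fixes H :: "('w, 'f) mgraph" and G :: "('v, 'e) mgraph" and \<phi> \<psi>
  assumes bij: "bij_betw \<phi> (verts H) (verts G)"
    and injp: "inj_on \<psi> (edges H)" and img: "\<psi> ` edges H \<subseteq> edges G"
    and endsr: "\<forall>e\<in>edges H. ends G (\<psi> e) = \<phi> ` ends H e"
    and wtr: "\<forall>x\<in>verts H. wt H x \<le> wt G (\<phi> x)"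
    and fin: "finite (edges G)"
    and endsH: "\<forall>e\<in>edges H. ends H e \<subseteq> verts H"
begin

lemma inj: "inj_on \<phi> (verts H)" using bij bij_betw_def by blast

lemma deg_le: "deg H x \<le> deg G (\<phi> x)"
  unfolding deg_def
  by (rule card_inj_on_le[OF inj_on_subset[OF injp]]) (use img endsr fin in auto)

lemma mult_le: assumes "a \<in> verts H" "b \<in> verts H"
  shows "mult H a b \<le> mult G (\<phi> a) (\<phi> b)"
  unfolding mult_def
  by (rule card_inj_on_le[OF inj_on_subset[OF injp]]) (use img endsr fin in auto)

lemma finH: "finite (edges H)"
  using finite_imageD[OF finite_subset[OF img fin] injp] .

lemma other_le: assumes "a \<in> verts H" "b \<in> verts H"
  shows "card {e \<in> edges H. a \<in> ends H e \<and> ends H e \<noteq> {a, b}}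
     \<le> card {e \<in> edges G. \<phi> a \<in> ends G e \<and> ends G e \<noteq> {\<phi> a, \<phi> b}}"
proof (rule card_inj_on_le[OF inj_on_subset[OF injp]])
  show "\<psi> ` {e \<in> edges H. a \<in> ends H e \<and> ends H e \<noteq> {a, b}}
     \<subseteq> {e \<in> edges G. \<phi> a \<in> ends G e \<and> ends G e \<noteq> {\<phi> a, \<phi> b}}"
  proof
    fix z assume "z \<in> \<psi> ` {e \<in> edges H. a \<in> ends H e \<and> ends H e \<noteq> {a, b}}"
    then obtain e where z: "z = \<psi> e" and e: "e \<in> edges H" "a \<in> ends H e" "ends H e \<noteq> {a, b}" by auto
    have sub: "ends H e \<union> {a, b} \<subseteq> verts H" using endsH e assms by auto
    have "\<phi> ` ends H e \<noteq> \<phi> ` {a, b}"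
    proof
      assume "\<phi> ` ends H e = \<phi> ` {a, b}"
      with inj_on_image_eq_iff[OF inj_on_subset[OF inj sub], of "ends H e" "{a,b}"] e(3)
      show False by blast
    qed
    then show "z \<in> {e \<in> edges G. \<phi> a \<in> ends G e \<and> ends G e \<noteq> {\<phi> a, \<phi> b}}"
      using e img endsr z by auto
  qed
qed (use fin in auto)

lemma diff_le: assumes "a \<in> verts H" "b \<in> verts H"
  shows "int (deg H a) - int (mult H a b) \<le> int (deg G (\<phi> a)) - int (mult G (\<phi> a) (\<phi> b))"
  using deg_split[OF finH, of a b] deg_split[OF fin, of "\<phi> a" "\<phi> b"] other_le[OF assms] by simp

lemma cond_lift: assumes "a \<in> verts H" "b \<in> verts H" "adm_cond H a b l"
  shows "adm_cond G (\<phi> a) (\<phi> b) l"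
proof -
  have 3: "\<forall>x\<in>verts G - {\<phi> a, \<phi> b}. deg G x \<ge> 3"
  proof
    fix x assume x: "x \<in> verts G - {\<phi> a, \<phi> b}"
    then obtain y where y: "y \<in> verts H" "x = \<phi> y" using bij bij_betw_imp_surj_on by blast
    then have "y \<in> verts H - {a, b}" using x by auto
    then have "deg H y \<ge> 3" using assms(3) unfolding adm_cond_def by blast
    then show "deg G x \<ge> 3" using deg_le[of y] y by simp
  qed
  show ?thesis using assms(3) 3 mult_le[OF assms(1,2)] diff_le[OF assms(1,2)] diff_le[OF assms(2,1)]
      wtr assms(1,2)
    unfolding adm_cond_def by (auto simp: insert_commute mult_def) 
qed

lemma neq_lift: assumes "e \<in> edges H" "a \<in> verts H" "b \<in> verts H" "ends H e \<noteq> {a, b}"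
  shows "ends G (\<psi> e) \<noteq> {\<phi> a, \<phi> b}"
proof
  assume h: "ends G (\<psi> e) = {\<phi> a, \<phi> b}"
  have sub: "ends H e \<union> {a, b} \<subseteq> verts H" using endsH assms by auto
  have "\<phi> ` ends H e = \<phi> ` {a, b}" using h endsr assms(1) by auto
  with inj_on_image_eq_iff[OF inj_on_subset[OF inj sub], of "ends H e" "{a,b}"] assms(4)
  show False by blast
qed

lemma step_lift:
  assumes st: "adm_step H H'"
  shows "\<exists>G'. adm_step G G' \<and> sp H' G' \<phi> \<psi>"
proof -
  obtain v w l where v: "v \<in> verts H" and w: "w \<in> verts H" and adj: "adjacent H v w"
    and c: "adm_cond H v w l \<or> adm_cond H w v l" and H': "H' = contract H v w"
    using st unfolding adm_step_def by blast
  define G' where "G' = contract G (\<phi> v) (\<phi> w)"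
  have vG: "\<phi> v \<in> verts G" and wG: "\<phi> w \<in> verts G" using v w bij bij_betw_apply by metis+
  have vw: "v \<noteq> w" using adj unfolding adjacent_def by simp
  have pvw: "\<phi> v \<noteq> \<phi> w" using vw inj v w inj_on_eq_iff by metis
  have adjG: "adjacent G (\<phi> v) (\<phi> w)"
  proof -
    obtain e where e: "e \<in> edges H" "ends H e = {v, w}" using adj unfolding adjacent_def by blast
    then show ?thesis using img endsr pvw unfolding adjacent_def by (intro conjI bexI[of _ "\<psi> e"]) auto
  qed
  have cG: "adm_cond G (\<phi> v) (\<phi> w) l \<or> adm_cond G (\<phi> w) (\<phi> v) l"
    using c cond_lift v w by blast
  have stepG: "adm_step G G'" unfolding adm_step_def G'_def using vG wG adjG cG by blast
  have "sp H' G' \<phi> \<psi>"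
  proof
    show "bij_betw \<phi> (verts H') (verts G')"
    proof -
      have "\<phi> ` (verts H - {w}) = verts G - {\<phi> w}"
        using inj_on_image_set_diff[OF inj, of "verts H" "{w}"] w bij bij_betw_imp_surj_on by force
      then show ?thesis unfolding H' G'_def contract_def bij_betw_def using inj inj_on_subset
        by (metis Diff_subset mgraph.select_convs(1))
    qed
    show "inj_on \<psi> (edges H')" unfolding H' contract_def using injp inj_on_subset by fastforce
    show "\<psi> ` edges H' \<subseteq> edges G'"
    proof
      fix z assume "z \<in> \<psi> ` edges H'"
      then obtain e where z: "z = \<psi> e" "e \<in> edges H" "ends H e \<noteq> {v, w}"
        unfolding H' contract_def by auto
      have "ends G (\<psi> e) \<noteq> {\<phi> v, \<phi> w}" using neq_lift z v w by blast
      then show "z \<in> edges G'" unfolding G'_def contract_def using z img by auto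
    qed
    show "\<forall>e\<in>edges H'. ends G' (\<psi> e) = \<phi> ` ends H' e"
    proof
      fix e assume "e \<in> edges H'"
      then have e: "e \<in> edges H" unfolding H' contract_def by simp
      have pw: "\<And>x. x \<in> verts H \<Longrightarrow> (if \<phi> x = \<phi> w then \<phi> v else \<phi> x) = \<phi> (if x = w then v else x)"
        using inj w inj_on_eq_iff by metis
      have "ends G' (\<psi> e) = (\<lambda>x. if \<phi> x = \<phi> w then \<phi> v else \<phi> x) ` ends H e"
        unfolding G'_def contract_def using endsr e by (simp only: mgraph.select_convs image_image)
      also have "\<dots> = (\<lambda>x. \<phi> (if x = w then v else x)) ` ends H e"
        by (rule image_cong[OF refl]) (use pw endsH e in blast)
      also have "\<dots> = \<phi> ` ends H' e" unfolding H' contract_def by (simp only: mgraph.select_convs image_image)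
      finally show "ends G' (\<psi> e) = \<phi> ` ends H' e" .
    qed
    show "\<forall>x\<in>verts H'. wt H' x \<le> wt G' (\<phi> x)"
    proof
      fix x assume x: "x \<in> verts H'"
      then have xH: "x \<in> verts H" "x \<noteq> w" unfolding H' contract_def by auto
      show "wt H' x \<le> wt G' (\<phi> x)"
      proof (cases "x = v")
        case True
        then show ?thesis unfolding H' G'_def contract_def using wtr v w by (simp add: add_mono)
      next
        case False
        then have "\<phi> x \<noteq> \<phi> v" using inj xH v inj_on_eq_iff by metis
        then show ?thesis unfolding H' G'_def contract_def using wtr xH False by simp
      qed
    qed
    show "finite (edges G')" unfolding G'_def contract_def using fin by simp
    show "\<forall>e\<in>edges H'. ends H' e \<subseteq> verts H'"
      unfolding H' contract_def using endsH v vw by auto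
  qed
  then show ?thesis using stepG by blast
qed

end

lemma lift_star:
  assumes "adm_step\<^sup>*\<^sup>* H H'" "sp H G \<phi> \<psi>"
  shows "\<exists>G'. adm_step\<^sup>*\<^sup>* G G' \<and> sp H' G' \<phi> \<psi>"
  using assms(1)
proof induction
  case base then show ?case using assms(2) by blast
next
  case (step y z)
  then obtain G' where "adm_step\<^sup>*\<^sup>* G G'" "sp y G' \<phi> \<psi>" by blast
  then show ?case using sp.step_lift[of y G' \<phi> \<psi> z] step(2)
    by (meson rtranclp.rtrancl_into_rtrancl)
qed

theorem lemma3p4:
  fixes G :: "('v, 'e) mgraph" and H :: "('w, 'f) mgraph"
  assumes "wf_mgraph G" and "wf_mgraph H"
    and "spanning_submgraph H G"
    and "adm_contractible H"
  shows "adm_contractible G"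
proof -
  obtain \<phi> \<psi> where "bij_betw \<phi> (verts H) (verts G) \<and>
     inj_on \<psi> (edges H) \<and> \<psi> ` edges H \<subseteq> edges G \<and>
     (\<forall>e\<in>edges H. ends G (\<psi> e) = \<phi> ` ends H e) \<and>
     (\<forall>x\<in>verts H. wt H x \<le> wt G (\<phi> x))"
    using assms(3) unfolding spanning_submgraph_def by blast
  moreover have "\<forall>e\<in>edges H. ends H e \<subseteq> verts H" using assms(2) unfolding wf_mgraph_def by fastforce
  ultimately have s: "sp H G \<phi> \<psi>" using assms(1) unfolding wf_mgraph_def sp_def by simp
  obtain H' where H': "adm_step\<^sup>*\<^sup>* H H'" "card (verts H') = 1"
    using assms(4) unfolding adm_contractible_def by blast
  obtain G' where "adm_step\<^sup>*\<^sup>* G G'" "sp H' G' \<phi> \<psi>" using lift_star[OF H'(1) s] by blast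
  then show ?thesis unfolding adm_contractible_def
    using H'(2) bij_betw_same_card sp.bij by metis
qed

end
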